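(* Let $N\geq3$ and $f,s\in\mathbb{R}$. Then $$\mathbb{E}\left[\det\left(W_{N-1}-fe_{N-1}e_{N-1}^T+sI_{N-1}\right)\right]=\mathbb{E}\left[\det(W_{N-1}+sI_{N-1})\right]-f\left(\frac{N-2}{N-1}\right)^{\frac{N-2}{2}}\mathbb{E}\left[\det\left(W_{N-2}+\sqrt{\tfrac{N-1}{N-2}}\,s\,I_{N-2}\right)\right].$$
   Context: For $n\ge1$, $W_n$ denotes the normalized GOE of size $n$: a real symmetric random matrix $(W_{ij})$ with $\{W_{ij}\}_{i\le j}$ independent centered Gaussians, $\mathbb{E}[W_{ij}^2]=1/n$ for $i\ne j$ and $\mathbb{E}[W_{ii}^2]=2/n$. $e_{N-1}$ is the last standard basis vector of $\mathbb{R}^{N-1}$ and $I_n$ the identity. *)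

theory Defs
  imports "HOL-Probability.Probability" "Jordan_Normal_Form.Determinant"
begin

definition goe_index :: "nat \<Rightarrow> (nat \<times> nat) set" where
  "goe_index n = {(i, j). i \<le> j \<and> j < n}"

text \<open>Normalized GOE of size n, as a law of the independent upper-triangular entries:
  centered Gaussians, variance 2/n on the diagonal and 1/n off the diagonal.\<close>
definition goe :: "nat \<Rightarrow> ((nat \<times> nat) \<Rightarrow> real) measure" where
  "goe n = (\<Pi>\<^sub>M ij\<in>goe_index n.
      density lborel (normal_density 0
        (if fst ij = snd ij then sqrt (2 / real n) else sqrt (1 / real n))))"

definition goe_mat :: "nat \<Rightarrow> ((nat \<times> nat) \<Rightarrow> real) \<Rightarrow> real mat" where
  "goe_mat n w = mat n n (\<lambda>(i, j). w (min i j, max i j))"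

end

theory Submission
  imports Defs
begin


lemma rank1_mat:
  assumes "k < n"
  shows "mat_of_cols n [unit_vec n k] * mat_of_rows n [unit_vec n k]
     = mat n n (\<lambda>(i,j). if i = k \<and> j = k then 1 else (0::real))"
  using assms by (intro eq_matI) (auto simp: scalar_prod_def unit_vec_def mat_of_cols_def mat_of_rows_def)

lemma det_minus_corner:
  fixes B :: "real mat"
  assumes B: "B \<in> carrier_mat n n" and k: "k < n"
  shows "det (B - f \<cdot>\<^sub>m mat n n (\<lambda>(i,j). if i = k \<and> j = k then 1 else 0))
       = det B - f * det (mat_delete B k k)"
proof -
  define B' where "B' = B - f \<cdot>\<^sub>m mat n n (\<lambda>(i,j). if i = k \<and> j = k then 1 else (0::real))"
  have B': "B' \<in> carrier_mat n n" using B by (auto simp: B'_def)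
  have del: "mat_delete B' i k = mat_delete B i k" for i
    using B k by (intro eq_matI) (auto simp: mat_delete_def B'_def)
  have "det B' = (\<Sum>i<n. B' $$ (i,k) * cofactor B' i k)"
    by (rule laplace_expansion_column[OF B' k])
  also have "\<dots> = (\<Sum>i<n. B $$ (i,k) * cofactor B i k - (if i = k then f * cofactor B k k else 0))"
  proof (intro sum.cong refl)
    fix i assume i: "i \<in> {..<n}"
    have c: "cofactor B' i k = cofactor B i k" by (simp add: cofactor_def del)
    have e: "B' $$ (i,k) = B $$ (i,k) - (if i = k then f else 0)"
      using B k i by (simp add: B'_def)
    show "B' $$ (i,k) * cofactor B' i k = B $$ (i,k) * cofactor B i k - (if i = k then f * cofactor B k k else 0)"
      unfolding c e by (auto simp: algebra_simps)
  qed
  also have "\<dots> = det B - f * cofactor B k k"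
    using k by (simp add: sum_subtractf laplace_expansion_column[OF B k])
  also have "cofactor B k k = det (mat_delete B k k)"
    by (simp add: cofactor_def)
  finally show ?thesis by (simp add: B'_def)
qed


lemma goe_index_finite: "finite (goe_index n)"
  by (rule finite_subset[of _ "{..<n} \<times> {..<n}"]) (auto simp: goe_index_def)

lemma goe_entry:
  assumes "i < m" "j < m"
  shows "(goe_mat m w + t \<cdot>\<^sub>m 1\<^sub>m m) $$ (i,j) = w (min i j, max i j) + (if i = j then t else 0)"
  using assms by (simp add: goe_mat_def)

lemma det_goe_expand:
  "det (goe_mat m w + t \<cdot>\<^sub>m 1\<^sub>m m) = (\<Sum>p\<in>{p. p permutes {0..<m}}. signof p *
      (\<Prod>i\<in>{0..<m}. w (min i (p i), max i (p i)) + (if i = p i then t else 0)))"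
proof -
  have C: "goe_mat m w + t \<cdot>\<^sub>m 1\<^sub>m m \<in> carrier_mat m m" by (simp add: goe_mat_def)
  show ?thesis unfolding det_def'[OF C]
  proof (intro sum.cong refl arg_cong2[where f="(*)"] prod.cong)
    fix p i assume p: "p \<in> {p. p permutes {0..<m}}" and i: "i \<in> {0..<m}"
    then have "p i < m" by (auto dest: permutes_in_image)
    then show "(goe_mat m w + t \<cdot>\<^sub>m 1\<^sub>m m) $$ (i, p i) = w (min i (p i), max i (p i)) + (if i = p i then t else 0)"
      using i by (simp add: goe_mat_def)
  qed
qed

lemma comp_meas:
  assumes "\<And>ij. sets (Mf ij) = sets borel" "ij \<in> I"
  shows "(\<lambda>w. w ij) \<in> borel_measurable (PiM I Mf)"
proof -
  have e: "measurable (PiM I Mf) (Mf ij) = measurable (PiM I Mf) borel"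
    by (rule measurable_cong_sets[OF refl assms(1)])
  show ?thesis using measurable_component_singleton[OF assms(2), of Mf] unfolding e .
qed

lemma det_goe_meas:
  assumes "\<And>ij. sets (Mf ij) = sets borel" "goe_index m \<subseteq> I"
  shows "(\<lambda>w. det (goe_mat m w + t \<cdot>\<^sub>m 1\<^sub>m m)) \<in> borel_measurable (PiM I Mf)"
  unfolding det_goe_expand
proof (rule borel_measurable_sum)
  fix p assume p: "p \<in> {p. p permutes {0..<m}}"
  show "(\<lambda>w. signof p * (\<Prod>i\<in>{0..<m}. w (min i (p i), max i (p i)) + (if i = p i then t else 0)))
      \<in> borel_measurable (PiM I Mf)"
  proof (rule borel_measurable_times[OF borel_measurable_const borel_measurable_prod])
    fix i assume i: "i \<in> {0..<m}"
    then have "p i < m" using p by (auto dest: permutes_in_image)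
    then have "(min i (p i), max i (p i)) \<in> I" using i assms(2) by (auto simp: goe_index_def)
    then have c: "(\<lambda>w. w (min i (p i), max i (p i))) \<in> borel_measurable (PiM I Mf)"
      by (rule comp_meas[OF assms(1)])
    show "(\<lambda>w. w (min i (p i), max i (p i)) + (if i = p i then t else 0)) \<in> borel_measurable (PiM I Mf)"
      by (rule borel_measurable_add[OF c borel_measurable_const])
  qed
qed

lemma det_goe_bound:
  assumes "goe_index m \<subseteq> I" "finite I"
  shows "\<bar>det (goe_mat m w + t \<cdot>\<^sub>m 1\<^sub>m m)\<bar> \<le> fact m * (1 + \<bar>t\<bar>) ^ m * (\<Prod>j\<in>I. (1 + \<bar>w j\<bar>) ^ m)"
proof -
  define P where "P = (\<Prod>j\<in>I. 1 + \<bar>w j\<bar>)"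
  have P1: "1 \<le> P" unfolding P_def by (rule prod_ge_1) auto
  have mem: "\<bar>w j\<bar> \<le> P" if "j \<in> I" for j
  proof -
    have "1 + \<bar>w j\<bar> \<le> P"
    proof -
      have "(1 + \<bar>w j\<bar>) * 1 \<le> (1 + \<bar>w j\<bar>) * (\<Prod>j\<in>I - {j}. 1 + \<bar>w j\<bar>)"
        by (rule mult_left_mono) (auto intro: prod_ge_1)
      then show ?thesis using that assms(2) prod.remove[of I j "\<lambda>j. 1 + \<bar>w j\<bar>"] by (simp add: P_def)
    qed
    then show ?thesis by simp
  qed
  have trm: "\<bar>\<Prod>i\<in>{0..<m}. w (min i (p i), max i (p i)) + (if i = p i then t else 0)\<bar> \<le> ((1 + \<bar>t\<bar>) * P) ^ m"
    if p: "p permutes {0..<m}" for p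
  proof -
    have "\<bar>\<Prod>i\<in>{0..<m}. w (min i (p i), max i (p i)) + (if i = p i then t else 0)\<bar>
        = (\<Prod>i\<in>{0..<m}. \<bar>w (min i (p i), max i (p i)) + (if i = p i then t else 0)\<bar>)"
      by (rule abs_prod)
    also have "\<dots> \<le> (\<Prod>i\<in>{0..<m}. (1 + \<bar>t\<bar>) * P)"
    proof (rule prod_mono, rule conjI)
      fix i assume i: "i \<in> {0..<m}"
      then have "p i < m" using p by (auto dest: permutes_in_image)
      then have "(min i (p i), max i (p i)) \<in> I" using i assms(1) by (auto simp: goe_index_def)
      then have a: "\<bar>w (min i (p i), max i (p i))\<bar> \<le> P" by (rule mem)
      have "\<bar>w (min i (p i), max i (p i)) + (if i = p i then t else 0)\<bar> \<le> P + \<bar>t\<bar>"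
      proof -
        have "\<bar>(if i = p i then t else 0)\<bar> \<le> \<bar>t\<bar>" by simp
        then show ?thesis using a abs_triangle_ineq[of "w (min i (p i), max i (p i))" "if i = p i then t else 0"]
          by linarith
      qed
      also have "\<dots> \<le> (1 + \<bar>t\<bar>) * P" using P1 mult_right_mono[OF P1, of "\<bar>t\<bar>"] by (simp add: algebra_simps)
      finally show "\<bar>w (min i (p i), max i (p i)) + (if i = p i then t else 0)\<bar> \<le> (1 + \<bar>t\<bar>) * P" .
    qed auto
    also have "\<dots> = ((1 + \<bar>t\<bar>) * P) ^ m" by simp
    finally show ?thesis .
  qed
  have "\<bar>det (goe_mat m w + t \<cdot>\<^sub>m 1\<^sub>m m)\<bar> \<le> (\<Sum>p\<in>{p. p permutes {0..<m}}.
      \<bar>signof p * (\<Prod>i\<in>{0..<m}. w (min i (p i), max i (p i)) + (if i = p i then t else 0))\<bar>)"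
    unfolding det_goe_expand by (rule sum_abs)
  also have "\<dots> \<le> (\<Sum>p\<in>{p. p permutes {0..<m}}. ((1 + \<bar>t\<bar>) * P) ^ m)"
    by (intro sum_mono) (auto simp: abs_mult sign_def trm)
  also have "\<dots> = fact m * ((1 + \<bar>t\<bar>) * P) ^ m"
    using card_permutations[of "{0..<m}" m] by (simp only: sum_constant) simp
  also have "\<dots> = fact m * (1 + \<bar>t\<bar>) ^ m * (\<Prod>j\<in>I. (1 + \<bar>w j\<bar>) ^ m)"
    by (simp add: P_def power_mult_distrib prod_power_distrib)
  finally show ?thesis .
qed

definition gs :: "nat \<Rightarrow> nat \<times> nat \<Rightarrow> real" where
  "gs n ij = (if fst ij = snd ij then sqrt (2 / real n) else sqrt (1 / real n))"

definition gM :: "nat \<Rightarrow> nat \<times> nat \<Rightarrow> real measure" where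
  "gM n ij = density lborel (normal_density 0 (gs n ij))"

lemma goe_eq: "goe n = PiM (goe_index n) (gM n)"
  unfolding goe_def by (intro PiM_cong) (auto simp: gM_def gs_def)

lemma sets_gM[simp]: "sets (gM n ij) = sets borel"
  by (simp add: gM_def)

lemma gs_pos: "0 < n \<Longrightarrow> 0 < gs n ij"
  by (simp add: gs_def)

lemma prob_gM: "0 < n \<Longrightarrow> prob_space (gM n ij)"
  unfolding gM_def by (rule prob_space_normal_density) (rule gs_pos)

lemma pps_gM: "0 < n \<Longrightarrow> product_prob_space (gM n)"
  by (rule product_prob_spaceI) (rule prob_gM)

lemma integrable_gM_pow: assumes n: "0 < n" shows "integrable (gM n ij) (\<lambda>x. (1 + \<bar>x\<bar>) ^ k)"
proof -
  have "integrable lborel (\<lambda>x. normal_density 0 (gs n ij) x * (1 + \<bar>x - 0\<bar> ^ k))"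
  proof -
    have A: "integrable lborel (normal_density 0 (gs n ij))" using gs_pos[OF n] by simp
    have B: "integrable lborel (\<lambda>x. normal_density 0 (gs n ij) x * \<bar>x\<bar> ^ k)"
      using integrable_normal_moment_abs[of "gs n ij" 0 k] gs_pos[OF n] by simp
    show ?thesis using Bochner_Integration.integrable_add[OF A B] by (simp add: distrib_left)
  qed
  then have "integrable lborel (\<lambda>x. 2 ^ k * (normal_density 0 (gs n ij) x * (1 + \<bar>x\<bar> ^ k)))"
    by simp
  then have "integrable lborel (\<lambda>x. normal_density 0 (gs n ij) x * (1 + \<bar>x\<bar>) ^ k)"
  proof (rule Bochner_Integration.integrable_bound)
    show "(\<lambda>x. normal_density 0 (gs n ij) x * (1 + \<bar>x\<bar>) ^ k) \<in> borel_measurable lborel" by simp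
    show "AE x in lborel. norm (normal_density 0 (gs n ij) x * (1 + \<bar>x\<bar>) ^ k)
            \<le> norm (2 ^ k * (normal_density 0 (gs n ij) x * (1 + \<bar>x\<bar> ^ k)))"
    proof (rule AE_I2)
      fix x :: real
      have "(1 + \<bar>x\<bar>) ^ k \<le> (2 * max 1 \<bar>x\<bar>) ^ k" by (intro power_mono) auto
      also have "\<dots> = 2 ^ k * max 1 \<bar>x\<bar> ^ k" by (simp add: power_mult_distrib)
      also have "max 1 \<bar>x\<bar> ^ k \<le> 1 + \<bar>x\<bar> ^ k" by (cases "1 \<le> \<bar>x\<bar>") (auto simp: max_def)
      finally have "(1 + \<bar>x\<bar>) ^ k \<le> 2 ^ k * (1 + \<bar>x\<bar> ^ k)" by simp
      then show "norm (normal_density 0 (gs n ij) x * (1 + \<bar>x\<bar>) ^ k)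
            \<le> norm (2 ^ k * (normal_density 0 (gs n ij) x * (1 + \<bar>x\<bar> ^ k)))"
      proof -
        have "normal_density 0 (gs n ij) x * (1 + \<bar>x\<bar>) ^ k \<le> normal_density 0 (gs n ij) x * (2 ^ k * (1 + \<bar>x\<bar> ^ k))"
          using \<open>(1 + \<bar>x\<bar>) ^ k \<le> 2 ^ k * (1 + \<bar>x\<bar> ^ k)\<close> by (rule mult_left_mono) simp
        then show ?thesis by (simp add: abs_mult mult_ac)
      qed
    qed
  qed
  then show ?thesis
    unfolding gM_def by (subst integrable_density) auto
qed

lemma det_goe_integrable:
  assumes "goe_index m \<subseteq> I" "finite I" "0 < n"
  shows "integrable (PiM I (gM n)) (\<lambda>w. det (goe_mat m w + t \<cdot>\<^sub>m 1\<^sub>m m))"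
proof -
  interpret product_prob_space "gM n" by (rule pps_gM[OF assms(3)])
  have "integrable (PiM I (gM n)) (\<lambda>w. \<Prod>j\<in>I. (1 + \<bar>w j\<bar>) ^ m)"
    by (rule product_integrable_prod[OF assms(2)]) (rule integrable_gM_pow[OF assms(3)])
  then have B: "integrable (PiM I (gM n)) (\<lambda>w. fact m * (1 + \<bar>t\<bar>) ^ m * (\<Prod>j\<in>I. (1 + \<bar>w j\<bar>) ^ m))"
    by simp
  show ?thesis
  proof (rule Bochner_Integration.integrable_bound[OF B])
    show "(\<lambda>w. det (goe_mat m w + t \<cdot>\<^sub>m 1\<^sub>m m)) \<in> borel_measurable (PiM I (gM n))"
      by (rule det_goe_meas[OF sets_gM assms(1)])
    show "AE w in PiM I (gM n). norm (det (goe_mat m w + t \<cdot>\<^sub>m 1\<^sub>m m))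
        \<le> norm (fact m * (1 + \<bar>t\<bar>) ^ m * (\<Prod>j\<in>I. (1 + \<bar>w j\<bar>) ^ m))"
    proof (rule AE_I2)
      fix w :: "nat \<times> nat \<Rightarrow> real"
      have nn: "0 \<le> fact m * (1 + \<bar>t\<bar>) ^ m * (\<Prod>j\<in>I. (1 + \<bar>w j\<bar>) ^ m)"
        by (intro mult_nonneg_nonneg prod_nonneg zero_le_power) auto
      show "norm (det (goe_mat m w + t \<cdot>\<^sub>m 1\<^sub>m m))
        \<le> norm (fact m * (1 + \<bar>t\<bar>) ^ m * (\<Prod>j\<in>I. (1 + \<bar>w j\<bar>) ^ m))"
        unfolding real_norm_def abs_of_nonneg[OF nn] by (rule det_goe_bound[OF assms(1,2)])
    qed
  qed
qed


lemma goe_mat_restrict: "goe_mat m (restrict w (goe_index m)) = goe_mat m w"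
  by (intro eq_matI) (auto simp: goe_mat_def goe_index_def)

lemma int_restrict:
  assumes "m \<le> n" "0 < n"
  shows "(\<integral>w. det (goe_mat m w + t \<cdot>\<^sub>m 1\<^sub>m m) \<partial>PiM (goe_index n) (gM n))
       = (\<integral>w. det (goe_mat m w + t \<cdot>\<^sub>m 1\<^sub>m m) \<partial>PiM (goe_index m) (gM n))"
proof -
  interpret product_prob_space "gM n" by (rule pps_gM[OF assms(2)])
  have sub: "goe_index m \<subseteq> goe_index n" using assms(1) by (auto simp: goe_index_def)
  have "(\<integral>w. det (goe_mat m w + t \<cdot>\<^sub>m 1\<^sub>m m) \<partial>PiM (goe_index m) (gM n))
      = (\<integral>w. det (goe_mat m w + t \<cdot>\<^sub>m 1\<^sub>m m) \<partial>distr (PiM (goe_index n) (gM n)) (PiM (goe_index m) (gM n)) (\<lambda>f. restrict f (goe_index m)))"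
    by (subst distr_restrict[OF sub goe_index_finite]) (rule refl)
  also have "\<dots> = (\<integral>w. det (goe_mat m (restrict w (goe_index m)) + t \<cdot>\<^sub>m 1\<^sub>m m) \<partial>PiM (goe_index n) (gM n))"
    by (rule integral_distr[OF measurable_restrict_subset[OF sub] det_goe_meas[OF sets_gM order_refl]])
  also have "\<dots> = (\<integral>w. det (goe_mat m w + t \<cdot>\<^sub>m 1\<^sub>m m) \<partial>PiM (goe_index n) (gM n))"
    by (simp add: goe_mat_restrict)
  finally show ?thesis by simp
qed

lemma distr_normal_scale:
  fixes \<sigma> c :: real
  assumes "0 < \<sigma>" "0 < c"
  shows "distr (density lborel (normal_density 0 \<sigma>)) (density lborel (normal_density 0 (c * \<sigma>))) (\<lambda>x. c * x)
       = density lborel (normal_density 0 (c * \<sigma>))"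
proof -
  define D where "D = density lborel (\<lambda>x. ennreal (normal_density 0 \<sigma> x))"
  interpret prob_space D unfolding D_def by (rule prob_space_normal_density[OF assms(1)])
  have "distributed D lborel (\<lambda>x. x) (normal_density 0 \<sigma>)"
    unfolding distributed_def D_def by (simp add: distr_id2)
  from normal_density_affine[OF this assms(1), of c 0] assms(2)
  have "distributed D lborel (\<lambda>x. c * x) (normal_density 0 (c * \<sigma>))" by simp
  then have "distr D lborel (\<lambda>x. c * x) = density lborel (normal_density 0 (c * \<sigma>))"
    by (rule distributed_distr_eq_density)
  moreover have "distr D (density lborel (normal_density 0 (c * \<sigma>))) (\<lambda>x. c * x) = distr D lborel (\<lambda>x. c * x)"
    by (rule distr_cong) auto
  ultimately show ?thesis by (simp add: D_def)
qed

lemma gs_scale: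
  assumes "0 < m" "0 < n"
  shows "sqrt (real m / real n) * gs m ij = gs n ij"
  using assms by (auto simp: gs_def real_sqrt_mult[symmetric])

lemma int_scale:
  assumes "0 < m" "0 < n"
  defines "c \<equiv> sqrt (real m / real n)"
  shows "(\<integral>w. det (goe_mat m w + t \<cdot>\<^sub>m 1\<^sub>m m) \<partial>PiM (goe_index m) (gM n))
       = c ^ m * (\<integral>w. det (goe_mat m w + (t / c) \<cdot>\<^sub>m 1\<^sub>m m) \<partial>PiM (goe_index m) (gM m))"
proof -
  have cpos: "0 < c" using assms by (simp add: c_def)
  let ?J = "goe_index m"
  have meas: "(\<lambda>x. c * x) \<in> measurable (gM m ij) (gM n ij)" for ij
    by (simp add: measurable_cong_sets[OF sets_gM sets_gM])
  have "PiM ?J (gM n) = PiM ?J (\<lambda>ij. distr (gM m ij) (gM n ij) (\<lambda>x. c * x))"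
  proof (rule PiM_cong[OF refl])
    fix ij
    show "gM n ij = distr (gM m ij) (gM n ij) (\<lambda>x. c * x)"
      unfolding gM_def using distr_normal_scale[OF gs_pos[OF assms(1)] cpos, of ij]
      by (simp add: c_def gs_scale[OF assms(1,2)])
  qed
  also have "\<dots> = distr (PiM ?J (gM m)) (PiM ?J (gM n)) (compose ?J (\<lambda>x. c * x))"
    by (rule distr_PiM_finite_prob_space'[symmetric, OF goe_index_finite prob_gM[OF assms(1)] prob_gM[OF assms(2)] meas])
  finally have eq: "PiM ?J (gM n) = distr (PiM ?J (gM m)) (PiM ?J (gM n)) (compose ?J (\<lambda>x. c * x))" .
  have cm: "compose ?J (\<lambda>x. c * x) \<in> measurable (PiM ?J (gM m)) (PiM ?J (gM n))"
    unfolding compose_def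
  proof (rule measurable_restrict)
    fix ij assume ij: "ij \<in> ?J"
    show "(\<lambda>v. c * v ij) \<in> measurable (PiM ?J (gM m)) (gM n ij)"
      using measurable_compose[OF measurable_component_singleton[OF ij, of "gM m"] meas[of ij]] by simp
  qed
  have gm: "goe_mat m (compose ?J (\<lambda>x. c * x) v) = c \<cdot>\<^sub>m goe_mat m v" for v
    by (intro eq_matI) (auto simp: goe_mat_def goe_index_def compose_def)
  have dd: "det (goe_mat m (compose ?J (\<lambda>x. c * x) v) + t \<cdot>\<^sub>m 1\<^sub>m m) = c ^ m * det (goe_mat m v + (t / c) \<cdot>\<^sub>m 1\<^sub>m m)" for v
  proof -
    have "goe_mat m (compose ?J (\<lambda>x. c * x) v) + t \<cdot>\<^sub>m 1\<^sub>m m = c \<cdot>\<^sub>m (goe_mat m v + (t / c) \<cdot>\<^sub>m 1\<^sub>m m)"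
      unfolding gm using cpos by (intro eq_matI) (auto simp: goe_mat_def algebra_simps)
    then show ?thesis by (simp add: goe_mat_def)
  qed
  have "(\<integral>w. det (goe_mat m w + t \<cdot>\<^sub>m 1\<^sub>m m) \<partial>PiM ?J (gM n))
      = (\<integral>v. det (goe_mat m (compose ?J (\<lambda>x. c * x) v) + t \<cdot>\<^sub>m 1\<^sub>m m) \<partial>PiM ?J (gM m))"
    by (subst eq) (rule integral_distr[OF cm det_goe_meas[OF sets_gM order_refl]])
  also have "\<dots> = c ^ m * (\<integral>w. det (goe_mat m w + (t / c) \<cdot>\<^sub>m 1\<^sub>m m) \<partial>PiM ?J (gM m))"
    unfolding dd by simp
  finally show ?thesis .
qed


lemma main_aux:
  fixes m :: nat and f s :: real
  assumes m: "0 < m"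
  defines "n \<equiv> Suc m"
  shows "(\<integral>w. det (goe_mat n w
              - f \<cdot>\<^sub>m (mat_of_cols n [unit_vec n m] * mat_of_rows n [unit_vec n m])
              + s \<cdot>\<^sub>m 1\<^sub>m n) \<partial>goe n)
       = (\<integral>w. det (goe_mat n w + s \<cdot>\<^sub>m 1\<^sub>m n) \<partial>goe n)
         - f * sqrt (real m / real n) ^ m
             * (\<integral>w. det (goe_mat m w + (s / sqrt (real m / real n)) \<cdot>\<^sub>m 1\<^sub>m m) \<partial>goe m)"
proof -
  have n0: "0 < n" by (simp add: n_def)
  have mn: "m < n" by (simp add: n_def)
  define E where "E = mat n n (\<lambda>(i,j). if i = m \<and> j = m then 1 else (0::real))"
  have eq1: "det (goe_mat n w - f \<cdot>\<^sub>m (mat_of_cols n [unit_vec n m] * mat_of_rows n [unit_vec n m]) + s \<cdot>\<^sub>m 1\<^sub>m n)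
      = det (goe_mat n w + s \<cdot>\<^sub>m 1\<^sub>m n) - f * det (goe_mat m w + s \<cdot>\<^sub>m 1\<^sub>m m)" for w
  proof -
    have C: "goe_mat n w + s \<cdot>\<^sub>m 1\<^sub>m n \<in> carrier_mat n n" by (simp add: goe_mat_def)
    have "goe_mat n w - f \<cdot>\<^sub>m (mat_of_cols n [unit_vec n m] * mat_of_rows n [unit_vec n m]) + s \<cdot>\<^sub>m 1\<^sub>m n
        = (goe_mat n w + s \<cdot>\<^sub>m 1\<^sub>m n) - f \<cdot>\<^sub>m E"
      unfolding rank1_mat[OF mn] E_def by (intro eq_matI) (auto simp: goe_mat_def)
    moreover have "mat_delete (goe_mat n w + s \<cdot>\<^sub>m 1\<^sub>m n) m m = goe_mat m w + s \<cdot>\<^sub>m 1\<^sub>m m"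
      by (intro eq_matI) (auto simp: mat_delete_def goe_mat_def n_def)
    ultimately show ?thesis
      using det_minus_corner[OF C mn, of f] by (simp add: E_def)
  qed
  have sub: "goe_index m \<subseteq> goe_index n" using mn by (auto simp: goe_index_def)
  have i1: "integrable (goe n) (\<lambda>w. det (goe_mat n w + s \<cdot>\<^sub>m 1\<^sub>m n))"
    unfolding goe_eq by (rule det_goe_integrable[OF order_refl goe_index_finite n0])
  have i2: "integrable (goe n) (\<lambda>w. f * det (goe_mat m w + s \<cdot>\<^sub>m 1\<^sub>m m))"
    unfolding goe_eq by (intro integrable_mult_right det_goe_integrable[OF sub goe_index_finite n0])
  have "(\<integral>w. det (goe_mat n w
              - f \<cdot>\<^sub>m (mat_of_cols n [unit_vec n m] * mat_of_rows n [unit_vec n m])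
              + s \<cdot>\<^sub>m 1\<^sub>m n) \<partial>goe n)
      = (\<integral>w. det (goe_mat n w + s \<cdot>\<^sub>m 1\<^sub>m n) - f * det (goe_mat m w + s \<cdot>\<^sub>m 1\<^sub>m m) \<partial>goe n)"
    unfolding eq1 ..
  also have "\<dots> = (\<integral>w. det (goe_mat n w + s \<cdot>\<^sub>m 1\<^sub>m n) \<partial>goe n) - (\<integral>w. f * det (goe_mat m w + s \<cdot>\<^sub>m 1\<^sub>m m) \<partial>goe n)"
    by (rule Bochner_Integration.integral_diff[OF i1 i2])
  also have "(\<integral>w. f * det (goe_mat m w + s \<cdot>\<^sub>m 1\<^sub>m m) \<partial>goe n) = f * (\<integral>w. det (goe_mat m w + s \<cdot>\<^sub>m 1\<^sub>m m) \<partial>goe n)"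
    by simp
  also have "(\<integral>w. det (goe_mat m w + s \<cdot>\<^sub>m 1\<^sub>m m) \<partial>goe n)
      = sqrt (real m / real n) ^ m * (\<integral>w. det (goe_mat m w + (s / sqrt (real m / real n)) \<cdot>\<^sub>m 1\<^sub>m m) \<partial>goe m)"
    unfolding goe_eq int_restrict[OF less_imp_le[OF mn] n0] by (rule int_scale[OF m n0])
  finally show ?thesis by (simp add: mult_ac)
qed

theorem lemmaA6:
  fixes N :: nat and f s :: real
  assumes "N \<ge> 3"
  shows "(\<integral>w. det (goe_mat (N - 1) w
              - f \<cdot>\<^sub>m (mat_of_cols (N - 1) [unit_vec (N - 1) (N - 2)]
                   * mat_of_rows (N - 1) [unit_vec (N - 1) (N - 2)])
              + s \<cdot>\<^sub>m 1\<^sub>m (N - 1)) \<partial>goe (N - 1))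
       = (\<integral>w. det (goe_mat (N - 1) w + s \<cdot>\<^sub>m 1\<^sub>m (N - 1)) \<partial>goe (N - 1))
         - f * ((real N - 2) / (real N - 1)) powr ((real N - 2) / 2)
             * (\<integral>w. det (goe_mat (N - 2) w
                   + (sqrt ((real N - 1) / (real N - 2)) * s) \<cdot>\<^sub>m 1\<^sub>m (N - 2)) \<partial>goe (N - 2))"
proof -
  define m where "m = N - 2"
  have m: "0 < m" using assms by (simp add: m_def)
  have N1: "N - 1 = Suc m" using assms by (simp add: m_def)
  have r1: "real N - 1 = real (Suc m)" using assms by (simp add: m_def of_nat_diff)
  have r2: "real N - 2 = real m" using assms by (simp add: m_def of_nat_diff)
  have p: "(real m / real (Suc m)) powr (real m / 2) = sqrt (real m / real (Suc m)) ^ m"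
  proof -
    have "sqrt (real m / real (Suc m)) ^ m = ((real m / real (Suc m)) powr (1/2)) powr real m"
      using m by (simp add: powr_half_sqrt powr_realpow)
    also have "\<dots> = (real m / real (Suc m)) powr (real m / 2)"
      by (simp add: powr_powr)
    finally show ?thesis by simp
  qed
  have q: "sqrt (real (Suc m) / real m) * s = s / sqrt (real m / real (Suc m))"
    using m by (simp add: real_sqrt_divide field_simps)
  show ?thesis
    unfolding N1 r1 r2 p q m_def[symmetric]
    using main_aux[OF m, of f s] by simp
qed

end
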